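(* The class $\mathcal{S}^*_{nc}$ satisfies: (1) $\mathcal{S}^*_{nc}\subset\mathcal{S}^*$; (2) $\mathcal{S}^*_{nc}\not\subset\mathcal{S}^*(\alpha)$ for every $\alpha\in(0,1)$; (3) $\mathcal{S}^*_{nc}\subset\mu(\beta)$ whenever $\beta\ge 2\sec 1$.
   Context: $\mathbb{D}$ is the open unit disk. $\mathcal{A}$ is the class of analytic $f$ on $\mathbb{D}$ with $f(0)=0$, $f'(0)=1$. For analytic $f,g$ on $\mathbb{D}$, $f\prec g$ means $f=g\circ\omega$ for some analytic $\omega:\mathbb{D}\to\mathbb{D}$ with $\omega(0)=0$. $\mathcal{S}^*_{nc}=\{f\in\mathcal{A}: zf'(z)/f(z)\prec (1+z)/\cos z\}$. $\mathcal{S}^*=\{f\in\mathcal{A}:\operatorname{Re}(zf'(z)/f(z))>0,\ z\in\mathbb{D}\}$; for $0\le\alpha<1$, $\mathcal{S}^*(\alpha)=\{f\in\mathcal{A}:\operatorname{Re}(zf'(z)/f(z))>\alpha,\ z\in\mathbb{D}\}$; for $\beta>1$, $\mu(\beta)=\{f\in\mathcal{A}:\operatorname{Re}(zf'(z)/f(z))<\beta,\ z\in\mathbb{D}\}$. *)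

theory Defs
  imports "HOL-Analysis.Analysis"
begin

definition unit_disk :: "complex set" where
  "unit_disk = ball 0 1"

definition classA :: "(complex \<Rightarrow> complex) set" where
  "classA = {f. f holomorphic_on unit_disk \<and> f 0 = 0 \<and> deriv f 0 = 1}"

definition subordinate :: "(complex \<Rightarrow> complex) \<Rightarrow> (complex \<Rightarrow> complex) \<Rightarrow> bool" where
  "subordinate f g \<longleftrightarrow> f holomorphic_on unit_disk \<and> g holomorphic_on unit_disk \<and>
     (\<exists>\<omega>. \<omega> holomorphic_on unit_disk \<and> \<omega> ` unit_disk \<subseteq> unit_disk \<and> \<omega> 0 = 0 \<and>
          (\<forall>z\<in>unit_disk. f z = g (\<omega> z)))"

text \<open>z f'(z)/f(z), with its removable value 1 at z = 0 (since f(0)=0, f'(0)=1).\<close>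
definition zfq :: "(complex \<Rightarrow> complex) \<Rightarrow> complex \<Rightarrow> complex" where
  "zfq f z = (if z = 0 then 1 else z * deriv f z / f z)"

definition S_nc :: "(complex \<Rightarrow> complex) set" where
  "S_nc = {f \<in> classA. subordinate (zfq f) (\<lambda>z. (1 + z) / cos z)}"

definition S_star :: "(complex \<Rightarrow> complex) set" where
  "S_star = {f \<in> classA. \<forall>z\<in>unit_disk. Re (zfq f z) > 0}"

definition S_star_alpha :: "real \<Rightarrow> (complex \<Rightarrow> complex) set" where
  "S_star_alpha \<alpha> = {f \<in> classA. \<forall>z\<in>unit_disk. Re (zfq f z) > \<alpha>}"

definition mu_class :: "real \<Rightarrow> (complex \<Rightarrow> complex) set" where
  "mu_class \<beta> = {f \<in> classA. \<forall>z\<in>unit_disk. Re (zfq f z) < \<beta>}"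

end

theory Submission imports Defs "HOL-Complex_Analysis.Complex_Analysis" begin

lemma ysinh_le: "y * sinh y \<le> y^2 * cosh (y::real)"
proof -
  have mono: "0 \<le> t \<Longrightarrow> sinh t \<le> t * cosh t" for t :: real
  proof -
    assume t: "0 \<le> t"
    let ?h = "\<lambda>t::real. t * cosh t - sinh t"
    have d: "(?h has_real_derivative (t * sinh t)) (at t)" for t :: real
      by (auto intro!: derivative_eq_intros)
    have "?h 0 \<le> ?h t"
      by (rule DERIV_nonneg_imp_nondecreasing[OF t]) (use d in \<open>auto intro!: exI mult_nonneg_nonneg\<close>)
    then show ?thesis by simp
  qed
  show ?thesis
  proof (cases "y \<ge> 0")
    case True
    from mult_left_mono[OF mono[OF True] True] show ?thesis by (simp add: power2_eq_square mult.assoc)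
  next
    case False
    then have "0 \<le> -y" by simp
    from mult_left_mono[OF mono[OF this] this] show ?thesis by (simp add: power2_eq_square mult.assoc)
  qed
qed

lemma cos_lower: "1 - x^2/2 \<le> cos (x::real)"
proof -
  have "cos x = 1 - 2 * (sin (x/2))^2" using cos_double_sin[of "x/2"] by simp
  moreover have "(sin (x/2))^2 \<le> (x/2)^2"
    using abs_sin_x_le_abs_x[of "x/2"] by (metis abs_ge_zero power2_abs power_mono)
  ultimately show ?thesis by (simp add: power_divide)
qed

lemma key_pos:
  fixes x y :: real assumes "x^2 + y^2 < 1"
  shows "(1+x) * cos x * cosh y - y * sin x * sinh y > 0"
proof -
  have "0 \<le> y^2" by simp
  then have "x^2 < 1" using assms by linarith
  then have x1: "\<bar>x\<bar> < 1" by (simp add: abs_square_less_1)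
  have cx: "cos x > 0" using x1 pi_gt3 cos_gt_zero[of "\<bar>x\<bar>"] cos_abs_real[of x]
    by (cases "x = 0") auto
  have ch: "cosh y \<ge> 1" by (rule cosh_real_ge_1)
  have ys: "y * sinh y \<ge> 0"
    by (cases "y \<ge> 0") (auto intro: mult_nonpos_nonpos)
  have lhs: "(1+x) * cos x * cosh y > 0" using x1 cx ch by auto
  show ?thesis
  proof (cases "x \<le> 0")
    case True
    have "sin (-x) \<ge> 0" using True x1 pi_gt3 by (intro sin_ge_zero) auto
    then have "sin x \<le> 0" by simp
    then have "y * sin x * sinh y \<le> 0" using ys
      by (metis mult.commute mult.left_commute mult_nonneg_nonpos)
    then show ?thesis using lhs by linarith
  next
    case False
    have sx0: "sin x \<ge> 0" using False x1 pi_gt3 by (intro sin_ge_zero) auto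
    have sxx: "sin x \<le> x" using False sin_x_le_x by auto
    have "y * sin x * sinh y = sin x * (y * sinh y)" by simp
    also have "\<dots> \<le> sin x * (y^2 * cosh y)" by (rule mult_left_mono[OF ysinh_le sx0])
    also have "\<dots> \<le> sin x * ((1 - x^2) * cosh y)"
      using sx0 ch assms by (intro mult_left_mono mult_right_mono) auto
    also have "\<dots> = (1+x) * cosh y * ((1-x) * sin x)" by (simp add: algebra_simps power2_eq_square)
    also have "\<dots> \<le> (1+x) * cosh y * ((1-x) * x)"
      using x1 ch sxx by (intro mult_left_mono) auto
    also have "\<dots> < (1+x) * cosh y * (1 - x^2/2)"
    proof (rule mult_strict_left_mono)
      have eq: "1 - x\<^sup>2 / 2 - (1 - x) * x = ((1-x)^2 + 1) / 2" by (simp add: power2_eq_square algebra_simps)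
      have "0 < ((1-x)^2 + 1) / 2" by (simp add: add_nonneg_pos)
      then show "(1 - x) * x < 1 - x\<^sup>2 / 2" using eq by linarith
      show "0 < (1+x) * cosh y" using x1 ch by auto
    qed
    also have "\<dots> \<le> (1+x) * cosh y * cos x" using cos_lower x1 ch by (intro mult_left_mono) auto
    finally show ?thesis by (simp add: algebra_simps)
  qed
qed

lemma cos_nz: "norm (w::complex) < 1 \<Longrightarrow> cos w \<noteq> 0"
  using cos_eq_zero_imp_norm_ge[of w] pi_gt3 by auto

lemma Re_cos': "Re (cos w) = cos (Re w) * cosh (Im w)"
  by (simp add: Re_cos cosh_field_def)
lemma Im_cos': "Im (cos w) = - (sin (Re w) * sinh (Im w))"
  by (simp add: Im_cos sinh_field_def field_simps)

lemma phi_re_pos: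
  assumes "norm (w::complex) < 1" shows "Re ((1 + w) / cos w) > 0"
proof -
  have h: "(Re w)^2 + (Im w)^2 < 1" using assms cmod_power2[of w]
    by (metis norm_ge_zero power_strict_mono one_power2 zero_less_numeral)
  have "cos w \<noteq> 0" using cos_nz assms by auto
  then have d: "(Re (cos w))^2 + (Im (cos w))^2 > 0"
    by (metis cmod_power2 zero_less_norm_iff zero_less_power)
  have "Re ((1 + w) / cos w) = ((1 + Re w) * cos (Re w) * cosh (Im w) - Im w * sin (Re w) * sinh (Im w)) / ((Re (cos w))^2 + (Im (cos w))^2)"
    by (simp add: Re_divide Re_cos' Im_cos' algebra_simps)
  then show ?thesis using key_pos[OF h] d by simp
qed

lemma phi_re_bound:
  assumes "norm (w::complex) < 1" shows "Re ((1 + w) / cos w) < 2 / cos 1"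
proof -
  have x1: "\<bar>Re w\<bar> < 1" using abs_Re_le_cmod[of w] assms by linarith
  have "(1::real) < pi/2" using pi_gt3 by linarith
  then have c1: "cos (1::real) > 0" using cos_gt_zero[of 1] by simp
  have "cos (1::real) \<le> cos \<bar>Re w\<bar>" using x1 pi_gt3 by (intro cos_monotone_0_pi_le) auto
  also have "\<dots> = cos (Re w)" by simp
  also have "\<dots> \<le> cos (Re w) * cosh (Im w)"
    using cosh_real_ge_1[of "Im w"] c1 calculation by (simp add: mult_le_cancel_left1)
  also have "\<dots> = Re (cos w)" by (simp add: Re_cos')
  also have "\<dots> \<le> norm (cos w)" using abs_Re_le_cmod[of "cos w"] by linarith
  finally have nc: "cos (1::real) \<le> norm (cos w)" .
  have n1: "norm (1 + w) < 2" using norm_triangle_ineq[of 1 w] assms by simp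
  have "Re ((1 + w) / cos w) \<le> norm ((1 + w) / cos w)" by (rule complex_Re_le_cmod)
  also have "\<dots> = norm (1 + w) / norm (cos w)" by (simp add: norm_divide)
  also have "\<dots> \<le> norm (1 + w) / cos 1" using nc c1 by (intro divide_left_mono mult_pos_pos) auto
  also have "\<dots> < 2 / cos 1" using n1 c1 by (intro divide_strict_right_mono) auto
  finally show ?thesis .
qed

definition phi :: "complex \<Rightarrow> complex" where "phi z = (1 + z) / cos z"

lemma phi_holo: "phi holomorphic_on unit_disk"
  unfolding phi_def unit_disk_def
  by (intro holomorphic_intros) (auto simp: cos_nz)

lemma phi0: "phi 0 = 1" by (simp add: phi_def)

lemma exists_extremal:
  obtains f where "f \<in> S_nc" "\<And>z. z \<in> unit_disk \<Longrightarrow> zfq f z = phi z"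
proof -
  define g where "g = (\<lambda>z. if z = 0 then deriv phi 0 else (phi z - phi 0) / (z - 0))"
  have D: "open unit_disk" "convex unit_disk" "0 \<in> unit_disk" by (auto simp: unit_disk_def)
  have gh: "g holomorphic_on unit_disk" unfolding g_def
    by (rule pole_lemma[OF phi_holo]) (simp add: D interior_open)
  obtain h where hd: "\<And>x. x \<in> unit_disk \<Longrightarrow> (h has_field_derivative g x) (at x within unit_disk)"
    using holomorphic_convex_primitive'[OF D(2) D(1) gh] by blast
  have hd': "(h has_field_derivative g x) (at x)" if "x \<in> unit_disk" for x
    using hd[OF that] at_within_open[OF that D(1)] by simp
  define f where "f = (\<lambda>z. z * exp (h z - h 0))"
  have fd: "(f has_field_derivative (exp (h z - h 0) + z * (g z * exp (h z - h 0)))) (at z)"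
    if "z \<in> unit_disk" for z
    unfolding f_def by (rule derivative_eq_intros hd'[OF that] refl | simp)+
  have df: "deriv f z = exp (h z - h 0) + z * (g z * exp (h z - h 0))" if "z \<in> unit_disk" for z
    using DERIV_imp_deriv[OF fd[OF that]] .
  have fholo: "f holomorphic_on unit_disk"
    using fd D(1) holomorphic_on_open by blast
  have A: "f \<in> classA" unfolding classA_def using fholo df[OF D(3)] by (simp add: f_def)
  have Z: "zfq f z = phi z" if "z \<in> unit_disk" for z
  proof (cases "z = 0")
    case True then show ?thesis by (simp add: zfq_def phi0)
  next
    case False
    have "z * g z = phi z - 1" using False by (simp add: g_def phi0)
    moreover have "deriv f z = exp (h z - h 0) * (1 + z * g z)" using df[OF that] by (simp add: algebra_simps)
    ultimately have "deriv f z = exp (h z - h 0) * phi z" by simp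
    then show ?thesis using False by (simp add: zfq_def f_def)
  qed
  have "zfq f holomorphic_on unit_disk"
    using phi_holo Z holomorphic_cong by (metis (mono_tags, lifting))
  moreover have "phi holomorphic_on unit_disk" by (rule phi_holo)
  ultimately have "subordinate (zfq f) (\<lambda>z. (1 + z) / cos z)"
    unfolding subordinate_def phi_def[symmetric]
    by (intro conjI exI[of _ "\<lambda>z. z"]) (auto simp: Z)
  then have "f \<in> S_nc" using A by (simp add: S_nc_def)
  then show ?thesis using that Z by blast
qed

lemma part1: "S_nc \<subseteq> S_star"
proof
  fix f assume "f \<in> S_nc"
  then obtain \<omega> where A: "f \<in> classA" and w: "\<omega> ` unit_disk \<subseteq> unit_disk"
    and e: "\<forall>z\<in>unit_disk. zfq f z = (1 + \<omega> z) / cos (\<omega> z)"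
    unfolding S_nc_def subordinate_def by blast
  have "Re (zfq f z) > 0" if "z \<in> unit_disk" for z
  proof -
    have "\<omega> z \<in> unit_disk" using w that by blast
    then have "norm (\<omega> z) < 1" by (simp add: unit_disk_def)
    then show ?thesis using e that phi_re_pos by simp
  qed
  then show "f \<in> S_star" using A by (simp add: S_star_def)
qed

lemma part3: "\<beta> \<ge> 2 / cos 1 \<Longrightarrow> S_nc \<subseteq> mu_class \<beta>"
proof
  fix f assume b: "\<beta> \<ge> 2 / cos 1" and "f \<in> S_nc"
  then obtain \<omega> where A: "f \<in> classA" and w: "\<omega> ` unit_disk \<subseteq> unit_disk"
    and e: "\<forall>z\<in>unit_disk. zfq f z = (1 + \<omega> z) / cos (\<omega> z)"
    unfolding S_nc_def subordinate_def by blast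
  have "Re (zfq f z) < \<beta>" if "z \<in> unit_disk" for z
  proof -
    have "\<omega> z \<in> unit_disk" using w that by blast
    then have "norm (\<omega> z) < 1" by (simp add: unit_disk_def)
    then show ?thesis using e that phi_re_bound[of "\<omega> z"] b by simp
  qed
  then show "f \<in> mu_class \<beta>" using A by (simp add: mu_class_def)
qed

lemma part2:
  assumes "0 < \<alpha>" "\<alpha> < 1" shows "\<not> (S_nc \<subseteq> S_star_alpha \<alpha>)"
proof
  assume sub: "S_nc \<subseteq> S_star_alpha \<alpha>"
  obtain f where f: "f \<in> S_nc" "\<And>z. z \<in> unit_disk \<Longrightarrow> zfq f z = phi z"
    using exists_extremal by blast
  have "(1::real) < pi/2" using pi_gt3 by linarith
  then have c1: "cos (1::real) > 0" using cos_gt_zero[of 1] by simp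
  have c1': "cos (1::real) \<le> 1" by simp
  define r where "r = 1 - \<alpha> * cos 1 / 2"
  have "\<alpha> * cos 1 \<le> \<alpha> * 1" using assms c1' by (intro mult_left_mono) auto
  moreover have "0 < \<alpha> * cos 1" using assms c1 by simp
  ultimately have r0: "0 < r" "r < 1" unfolding r_def using assms by linarith+
  have cr: "cos 1 \<le> cos r" using r0 pi_gt3 by (intro cos_monotone_0_pi_le) auto
  define z where "z = - complex_of_real r"
  have zD: "z \<in> unit_disk" using r0 by (simp add: z_def unit_disk_def)
  have "phi z = complex_of_real ((1 - r) / cos r)"
    by (simp add: phi_def z_def cos_of_real)
  then have "Re (zfq f z) = (1 - r) / cos r" using f(2)[OF zD] by simp
  also have "\<dots> \<le> (1 - r) / cos 1" using r0 cr c1 by (intro divide_left_mono) auto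
  also have "\<dots> = \<alpha> / 2" using c1 by (simp add: r_def)
  finally have "Re (zfq f z) < \<alpha>" using assms by simp
  moreover have "f \<in> S_star_alpha \<alpha>" using sub f(1) by blast
  ultimately show False using zD by (auto simp: S_star_alpha_def)
qed

theorem mainTheorem8:
  shows "S_nc \<subseteq> S_star \<and>
         (\<forall>\<alpha>::real. 0 < \<alpha> \<and> \<alpha> < 1 \<longrightarrow> \<not> (S_nc \<subseteq> S_star_alpha \<alpha>)) \<and>
         (\<forall>\<beta>::real. \<beta> \<ge> 2 / cos 1 \<longrightarrow> S_nc \<subseteq> mu_class \<beta>)"
  using part1 part2 part3 by blast

end
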